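(* A $po$-$\Gamma$-semigroup $M$ is left regular if and only if for every fuzzy subset $f$ of $M$ we have $f\preceq 1\circ (f\circ f)$.
   Context: Let $M$ and $\Gamma$ be nonempty sets with a map $M\times\Gamma\times M\to M$, $(a,\gamma,b)\mapsto a\gamma b$, satisfying $(a\gamma b)\mu c=a\gamma(b\mu c)$ for all $a,b,c\in M$, $\gamma,\mu\in\Gamma$. A $po$-$\Gamma$-semigroup is such an $M$ with a partial order $\le$ such that $a\le b$ implies $a\gamma c\le b\gamma c$ and $c\gamma a\le c\gamma b$ for all $c\in M$, $\gamma\in\Gamma$. For $H\subseteq M$, $(H]=\{t\in M: t\le h \text{ for some } h\in H\}$; $M\Gamma a\Gamma a=\{x\gamma a\mu a: x\in M,\gamma,\mu\in\Gamma\}$. $M$ is left regular if $a\in(M\Gamma a\Gamma a]$ for every $a\in M$. A fuzzy subset of $M$ is a map $M\to[0,1]$; $1$ is the constant fuzzy subset with value $1$. For $c\in M$ let $A_c=\{(y,z)\in M\times M: c\le y\gamma z \text{ for some }\gamma\in\Gamma\}$. $(f\circ g)(c)=\bigvee_{(y,z)\in A_c}\min\{f(y),g(z)\}$ if $A_c\ne\emptyset$, and $0$ otherwise. $f\preceq g$ means $f(c)\le g(c)$ for all $c\in M$. *)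

theory Defs
  imports Complex_Main
begin

text \<open>M and Gamma are modelled by the (nonempty) types 'm and 'g; the ternary
operation is mult a \<gamma> b, the order is le.\<close>

definition po_gamma_semigroup :: "('m \<Rightarrow> 'g \<Rightarrow> 'm \<Rightarrow> 'm) \<Rightarrow> ('m \<Rightarrow> 'm \<Rightarrow> bool) \<Rightarrow> bool" where
  "po_gamma_semigroup mult le \<longleftrightarrow>
     (\<forall>a b c \<gamma> \<mu>. mult (mult a \<gamma> b) \<mu> c = mult a \<gamma> (mult b \<mu> c)) \<and>
     (\<forall>a. le a a) \<and> (\<forall>a b. le a b \<and> le b a \<longrightarrow> a = b) \<and>
     (\<forall>a b c. le a b \<and> le b c \<longrightarrow> le a c) \<and>
     (\<forall>a b c \<gamma>. le a b \<longrightarrow> le (mult a \<gamma> c) (mult b \<gamma> c) \<and> le (mult c \<gamma> a) (mult c \<gamma> b))"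

definition down_closure :: "('m \<Rightarrow> 'm \<Rightarrow> bool) \<Rightarrow> 'm set \<Rightarrow> 'm set" where
  "down_closure le H = {t. \<exists>h\<in>H. le t h}"

definition left_regular :: "('m \<Rightarrow> 'g \<Rightarrow> 'm \<Rightarrow> 'm) \<Rightarrow> ('m \<Rightarrow> 'm \<Rightarrow> bool) \<Rightarrow> bool" where
  "left_regular mult le \<longleftrightarrow>
     (\<forall>a. a \<in> down_closure le {mult (mult x \<gamma> a) \<mu> a | x \<gamma> \<mu>. True})"

definition fuzzy_subset :: "('m \<Rightarrow> real) \<Rightarrow> bool" where
  "fuzzy_subset f \<longleftrightarrow> (\<forall>x. 0 \<le> f x \<and> f x \<le> 1)"

definition A_set :: "('m \<Rightarrow> 'g \<Rightarrow> 'm \<Rightarrow> 'm) \<Rightarrow> ('m \<Rightarrow> 'm \<Rightarrow> bool) \<Rightarrow> 'm \<Rightarrow> ('m \<times> 'm) set" where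
  "A_set mult le c = {(y, z). \<exists>\<gamma>. le c (mult y \<gamma> z)}"

definition fuzzy_comp :: "('m \<Rightarrow> 'g \<Rightarrow> 'm \<Rightarrow> 'm) \<Rightarrow> ('m \<Rightarrow> 'm \<Rightarrow> bool) \<Rightarrow>
    ('m \<Rightarrow> real) \<Rightarrow> ('m \<Rightarrow> real) \<Rightarrow> 'm \<Rightarrow> real" where
  "fuzzy_comp mult le f g c =
     (if A_set mult le c = {} then 0
      else Sup ((\<lambda>(y, z). min (f y) (g z)) ` A_set mult le c))"

definition fuzzy_le :: "('m \<Rightarrow> real) \<Rightarrow> ('m \<Rightarrow> real) \<Rightarrow> bool" where
  "fuzzy_le f g \<longleftrightarrow> (\<forall>c. f c \<le> g c)"

end

theory Submission
  imports Defs
begin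

lemma comp_pos:
  assumes "fuzzy_comp mult le f g c > 0"
  shows "\<exists>y z \<gamma>. le c (mult y \<gamma> z) \<and> min (f y) (g z) > 0"
proof (rule ccontr)
  assume n: "\<not> ?thesis"
  have ne: "A_set mult le c \<noteq> {}" using assms unfolding fuzzy_comp_def by (auto split: if_splits)
  have "Sup ((\<lambda>(y, z). min (f y) (g z)) ` A_set mult le c) \<le> 0"
  proof (rule cSup_least)
    show "(\<lambda>(y, z). min (f y) (g z)) ` A_set mult le c \<noteq> {}" using ne by simp
    fix x assume "x \<in> (\<lambda>(y, z). min (f y) (g z)) ` A_set mult le c"
    then obtain y z \<gamma> where "x = min (f y) (g z)" "le c (mult y \<gamma> z)"
      unfolding A_set_def by auto
    then show "x \<le> 0" using n by (meson not_less)
  qed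
  then show False using assms ne unfolding fuzzy_comp_def by auto
qed

lemma comp_ge:
  assumes "le c (mult y \<gamma> z)" and "\<forall>x. f x \<le> 1"
  shows "min (f y) (g z) \<le> fuzzy_comp mult le f g c"
proof -
  have yz: "(y, z) \<in> A_set mult le c" using assms(1) unfolding A_set_def by auto
  have "min (f y) (g z) \<le> Sup ((\<lambda>(y, z). min (f y) (g z)) ` A_set mult le c)"
  proof (rule cSup_upper)
    show "min (f y) (g z) \<in> (\<lambda>(y, z). min (f y) (g z)) ` A_set mult le c"
      using yz by (rule rev_image_eqI) simp
    show "bdd_above ((\<lambda>(y, z). min (f y) (g z)) ` A_set mult le c)"
      unfolding bdd_above_def
    proof (intro exI ballI)
      fix x assume "x \<in> (\<lambda>(y, z). min (f y) (g z)) ` A_set mult le c"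
      then obtain y z where "x = min (f y) (g z)" by auto
      then show "x \<le> 1" using assms(2) by (simp add: min_le_iff_disj)
    qed
  qed
  then show ?thesis using yz unfolding fuzzy_comp_def by auto
qed

lemma comp_le1:
  assumes "\<forall>x. f x \<le> 1"
  shows "fuzzy_comp mult le f g c \<le> 1"
proof (cases "A_set mult le c = {}")
  case True then show ?thesis by (simp add: fuzzy_comp_def)
next
  case False
  have "Sup ((\<lambda>(y, z). min (f y) (g z)) ` A_set mult le c) \<le> 1"
  proof (rule cSup_least)
    show "(\<lambda>(y, z). min (f y) (g z)) ` A_set mult le c \<noteq> {}" using False by simp
    fix x assume "x \<in> (\<lambda>(y, z). min (f y) (g z)) ` A_set mult le c"
    then obtain y z where "x = min (f y) (g z)" by auto
    then show "x \<le> 1" using assms by (simp add: min_le_iff_disj)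
  qed
  then show ?thesis using False by (simp add: fuzzy_comp_def)
qed

theorem theorem28:
  fixes mult :: "'m \<Rightarrow> 'g \<Rightarrow> 'm \<Rightarrow> 'm" and le :: "'m \<Rightarrow> 'm \<Rightarrow> bool"
  assumes "po_gamma_semigroup mult le"
  shows "left_regular mult le \<longleftrightarrow>
    (\<forall>f. fuzzy_subset f \<longrightarrow>
       fuzzy_le f (fuzzy_comp mult le (\<lambda>_. 1) (fuzzy_comp mult le f f)))"
proof -
  have assoc: "\<And>a b c \<gamma> \<mu>. mult (mult a \<gamma> b) \<mu> c = mult a \<gamma> (mult b \<mu> c)"
    and refl: "\<And>a. le a a"
    and trans: "\<And>a b c. le a b \<Longrightarrow> le b c \<Longrightarrow> le a c"
    and monoR: "\<And>a b c \<gamma>. le a b \<Longrightarrow> le (mult c \<gamma> a) (mult c \<gamma> b)"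
    using assms unfolding po_gamma_semigroup_def by meson+
  show ?thesis
proof
  assume lr: "left_regular mult le"
  show "\<forall>f. fuzzy_subset f \<longrightarrow>
       fuzzy_le f (fuzzy_comp mult le (\<lambda>_. 1) (fuzzy_comp mult le f f))"
  proof (intro allI impI)
    fix f :: "'m \<Rightarrow> real" assume fs: "fuzzy_subset f"
    have f1: "\<forall>x. f x \<le> 1" using fs unfolding fuzzy_subset_def by auto
    show "fuzzy_le f (fuzzy_comp mult le (\<lambda>_. 1) (fuzzy_comp mult le f f))"
      unfolding fuzzy_le_def
    proof
      fix a
      obtain x \<gamma> \<mu> where h: "le a (mult (mult x \<gamma> a) \<mu> a)"
        using lr unfolding left_regular_def down_closure_def by blast
      have h2: "le a (mult x \<gamma> (mult a \<mu> a))" using h by (simp add: assoc)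
      have r: "le (mult a \<mu> a) (mult a \<mu> a)" by (rule refl)
      have "f a \<le> fuzzy_comp mult le f f (mult a \<mu> a)"
        using comp_ge[of le "mult a \<mu> a" mult a \<mu> a f f] r f1 by simp
      moreover have "min 1 (fuzzy_comp mult le f f (mult a \<mu> a))
          \<le> fuzzy_comp mult le (\<lambda>_. 1) (fuzzy_comp mult le f f) a"
        using comp_ge[of le a mult x \<gamma> "mult a \<mu> a" "\<lambda>_. 1" "fuzzy_comp mult le f f"] h2 by simp
      moreover have "fuzzy_comp mult le f f (mult a \<mu> a) \<le> 1" using comp_le1[OF f1] .
      ultimately show "f a \<le> fuzzy_comp mult le (\<lambda>_. 1) (fuzzy_comp mult le f f) a" by simp
    qed
  qed
next
  assume H: "\<forall>f. fuzzy_subset f \<longrightarrow>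
       fuzzy_le f (fuzzy_comp mult le (\<lambda>_. 1) (fuzzy_comp mult le f f))"
  show "left_regular mult le"
    unfolding left_regular_def down_closure_def
  proof (intro allI CollectI)
    fix a
    define f :: "'m \<Rightarrow> real" where "f = (\<lambda>t. if t = a then 1 else 0)"
    have "fuzzy_subset f" unfolding fuzzy_subset_def f_def by auto
    with H have "f a \<le> fuzzy_comp mult le (\<lambda>_. 1) (fuzzy_comp mult le f f) a"
      unfolding fuzzy_le_def by blast
    then have "fuzzy_comp mult le (\<lambda>_. 1) (fuzzy_comp mult le f f) a > 0" by (simp add: f_def)
    then obtain y z \<gamma> where 1: "le a (mult y \<gamma> z)" and "fuzzy_comp mult le f f z > 0"
      using comp_pos[of mult le "\<lambda>_. 1" "fuzzy_comp mult le f f" a] by auto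
    then obtain u v \<mu> where 2: "le z (mult u \<mu> v)" and "min (f u) (f v) > 0"
      using comp_pos[of mult le f f z] by blast
    then have uv: "u = a" "v = a" unfolding f_def by (auto split: if_splits)
    have "le (mult y \<gamma> z) (mult y \<gamma> (mult a \<mu> a))" using 2 uv monoR by simp
    then have "le a (mult (mult y \<gamma> a) \<mu> a)" using trans[OF 1] by (simp add: assoc)
    then show "\<exists>h\<in>{mult (mult x \<gamma> a) \<mu> a |x \<gamma> \<mu>. True}. le a h" by blast
  qed
qed
qed

end
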